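(* Assume $\delta=0$ (only direct learning). For all sufficiently large $n$ there exists a symmetric investment equilibrium, and along any sequence of symmetric investment equilibria $(p^*,q^* )$, $$\lim_{n\to\infty}\iota(q^*,q^* )\,n^{1/k}=(k-1)^{1/k}.$$
   Context: Model (for each number of firms $n\ge 2$). There are $n$ firms $1,\dots,n$; firm $i$ can discover a single idea, also labelled $i$. Fixed parameters (independent of $n$): an integer complexity $k\ge 2$, an indirect-learning probability $\delta\in[0,1]$, and a cost function $c:[0,1)\to[0,\infty)$ that is continuously differentiable, increasing and convex with $c(0)=0$ and $c(p)\to\infty$ as $p\to1^-$. Each firm $i$ chooses $(p_i,q_i)\in[0,1)\times[0,1]$. Idea $i$ is discovered independently with probability $p_i$; $I$ is the random set of discovered ideas. The interaction rate is $\iota(q_i,q_j)=q_iq_j$. For each ordered pair $i\neq j$, independently, $i$ learns directly from $j$ with probability $\iota(q_i,q_j)$, and conditional on this, independently with probability $\delta$, $i$ also learns indirectly through $j$. The indirect-learning network has an edge $j\to i$ whenever $i$ learns indirectly through $j$. $I_i(\mathbf p,\mathbf q)=\{j\in I\setminus\{i\}:$ some firm $m$, with $m=i$ or with a directed path from $m$ to $i$ in the indirect-learning network, learns directly from $j\}$ (when $\delta=0$ this is just the set of discovered ideas $j$ such that $i$ learns directly from $j$). A technology is a $k$-element subset $t\subseteq I$; firm $j$ knows $t$ if $t\subseteq\{j\}\cup I_j$. $PT_i$ is the set of technologies $t$ with $i\in t$ known by $i$ and by no other firm. Payoff $U_i=\mathbb E|PT_i|-c(p_i)$. An equilibrium is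 a pure-strategy Nash equilibrium; symmetric if all firms choose the same action; investment if all $p_i>0$. Sequences are indexed by $n\to\infty$. *)

theory Defs
  imports "HOL-Analysis.Analysis"
begin

text \<open>Firms and ideas are indexed by 0..<n. A strategy profile is a pair of
functions p q :: nat => real (only values below n matter).\<close>

definition iota :: "real \<Rightarrow> real \<Rightarrow> real" where
  "iota a b = a * b"

definition offdiag :: "nat \<Rightarrow> (nat \<times> nat) set" where
  "offdiag n = {(i,j). i < n \<and> j < n \<and> i \<noteq> j}"

text \<open>A realisation: D = discovered ideas; L = set of ordered pairs (i,j) such that
i learns directly from j; M \<subseteq> L = pairs (i,j) such that i also learns indirectly
through j.\<close>

definition indirect_net :: "(nat \<times> nat) set \<Rightarrow> (nat \<times> nat) set" where
  "indirect_net M = {(j,i). (i,j) \<in> M}"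

definition learned :: "nat set \<Rightarrow> (nat \<times> nat) set \<Rightarrow> (nat \<times> nat) set \<Rightarrow> nat \<Rightarrow> nat set" where
  "learned D L M i = {j \<in> D - {i}. \<exists>m. (m = i \<or> (m, i) \<in> trancl (indirect_net M)) \<and> (m, j) \<in> L}"

definition knows :: "nat set \<Rightarrow> (nat \<times> nat) set \<Rightarrow> (nat \<times> nat) set \<Rightarrow> nat \<Rightarrow> nat set \<Rightarrow> bool" where
  "knows D L M j t \<longleftrightarrow> t \<subseteq> insert j (learned D L M j)"

definition PT :: "nat \<Rightarrow> nat \<Rightarrow> nat set \<Rightarrow> (nat \<times> nat) set \<Rightarrow> (nat \<times> nat) set \<Rightarrow> nat \<Rightarrow> nat set set" where
  "PT n k D L M i = {t. t \<subseteq> D \<and> card t = k \<and> i \<in> t \<and> knows D L M i t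
      \<and> (\<forall>j<n. j \<noteq> i \<longrightarrow> \<not> knows D L M j t)}"

text \<open>Probability of a realisation (D, L, M) under profile (p, q) and indirect-learning
probability delta; all events are independent.\<close>

definition weight :: "nat \<Rightarrow> real \<Rightarrow> (nat \<Rightarrow> real) \<Rightarrow> (nat \<Rightarrow> real) \<Rightarrow>
    nat set \<Rightarrow> (nat \<times> nat) set \<Rightarrow> (nat \<times> nat) set \<Rightarrow> real" where
  "weight n \<delta> p q D L M =
     (\<Prod>j<n. if j \<in> D then p j else 1 - p j) *
     (\<Prod>(i,j)\<in>offdiag n.
        if (i,j) \<notin> L then 1 - iota (q i) (q j)
        else if (i,j) \<in> M then iota (q i) (q j) * \<delta>
        else iota (q i) (q j) * (1 - \<delta>))"

definition expected_PT :: "nat \<Rightarrow> nat \<Rightarrow> real \<Rightarrow> (nat \<Rightarrow> real) \<Rightarrow> (nat \<Rightarrow> real) \<Rightarrow> nat \<Rightarrow> real" where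
  "expected_PT n k \<delta> p q i =
     (\<Sum>D\<in>Pow {..<n}. \<Sum>L\<in>Pow (offdiag n). \<Sum>M\<in>Pow L.
        weight n \<delta> p q D L M * real (card (PT n k D L M i)))"

definition payoff :: "nat \<Rightarrow> nat \<Rightarrow> real \<Rightarrow> (real \<Rightarrow> real) \<Rightarrow> (nat \<Rightarrow> real) \<Rightarrow> (nat \<Rightarrow> real) \<Rightarrow> nat \<Rightarrow> real" where
  "payoff n k \<delta> c p q i = expected_PT n k \<delta> p q i - c (p i)"

definition admissible :: "real \<Rightarrow> real \<Rightarrow> bool" where
  "admissible a b \<longleftrightarrow> 0 \<le> a \<and> a < 1 \<and> 0 \<le> b \<and> b \<le> 1"

definition nash_eq :: "nat \<Rightarrow> nat \<Rightarrow> real \<Rightarrow> (real \<Rightarrow> real) \<Rightarrow> (nat \<Rightarrow> real) \<Rightarrow> (nat \<Rightarrow> real) \<Rightarrow> bool" where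
  "nash_eq n k \<delta> c p q \<longleftrightarrow>
     (\<forall>i<n. admissible (p i) (q i)) \<and>
     (\<forall>i<n. \<forall>a b. admissible a b \<longrightarrow>
        payoff n k \<delta> c (p(i := a)) (q(i := b)) i \<le> payoff n k \<delta> c p q i)"

definition sym_inv_eq :: "nat \<Rightarrow> real \<Rightarrow> (real \<Rightarrow> real) \<Rightarrow> nat \<Rightarrow> real \<Rightarrow> real \<Rightarrow> bool" where
  "sym_inv_eq k \<delta> c n ps qs \<longleftrightarrow> 0 < ps \<and> nash_eq n k \<delta> c (\<lambda>_. ps) (\<lambda>_. qs)"

definition cost_ok :: "(real \<Rightarrow> real) \<Rightarrow> bool" where
  "cost_ok c \<longleftrightarrow>
     (\<exists>c'. (\<forall>x\<in>{0..<1}. (c has_real_derivative c' x) (at x within {0..<1}))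
           \<and> continuous_on {0..<1} c')
     \<and> strict_mono_on {0..<1} c
     \<and> convex_on {0..<1} c
     \<and> c 0 = 0
     \<and> filterlim c at_top (at_left 1)"

end

theory Submission
  imports Defs
begin


lemma sum_Pow_split:
  assumes "finite A" "finite B" "A \<inter> B = {}"
  shows "(\<Sum>L\<in>Pow (A \<union> B). f (L \<inter> A) * g (L \<inter> B)) = (\<Sum>X\<in>Pow A. f X) * (\<Sum>Y\<in>Pow B. (g Y :: real))"
proof -
  have "(\<Sum>X\<in>Pow A. f X) * (\<Sum>Y\<in>Pow B. g Y) = (\<Sum>(X,Y)\<in>Pow A \<times> Pow B. f X * g Y)"
    by (simp add: sum_product sum.cartesian_product)
  also have "\<dots> = (\<Sum>L\<in>Pow (A \<union> B). f (L \<inter> A) * g (L \<inter> B))"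
    apply (rule sum.reindex_bij_witness[where i="\<lambda>L. (L\<inter>A, L\<inter>B)" and j="\<lambda>(X,Y). X \<union> Y"])
    using assms apply auto
    subgoal for a b
      apply (subgoal_tac "(a \<union> b) \<inter> A = a \<and> (a \<union> b) \<inter> B = b")
       apply simp
      by blast
    done
  finally show ?thesis by simp
qed



lemma sum_Pow_UNION:
  assumes "finite I" "\<forall>g\<in>I. finite (G g)" "disjoint_family_on G I"
  shows "(\<Sum>L\<in>Pow (\<Union>g\<in>I. G g). \<Prod>g\<in>I. H g (L \<inter> G g)) = (\<Prod>g\<in>I. \<Sum>B\<in>Pow (G g). (H g B :: real))"
  using assms
proof (induction I rule: finite_induct)
  case empty
  then show ?case by simp
next
  case (insert x F)
  let ?U = "\<Union>g\<in>F. G g"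
  have disj: "G x \<inter> ?U = {}"
  proof -
    have "\<And>g. g \<in> F \<Longrightarrow> G x \<inter> G g = {}"
      using insert.prems(2) insert.hyps(2) unfolding disjoint_family_on_def by force
    then show ?thesis by blast
  qed
  have fin: "finite (G x)" "finite ?U" using insert.prems(1) insert.hyps(1) by auto
  have eq: "(\<Prod>g\<in>insert x F. H g (L \<inter> G g)) = H x (L \<inter> G x) * (\<lambda>Y. \<Prod>g\<in>F. H g (Y \<inter> G g)) (L \<inter> ?U)" for L
  proof -
    have "\<And>g. g \<in> F \<Longrightarrow> L \<inter> ?U \<inter> G g = L \<inter> G g" by blast
    then have "(\<Prod>g\<in>F. H g (L \<inter> ?U \<inter> G g)) = (\<Prod>g\<in>F. H g (L \<inter> G g))"
      by (intro prod.cong) auto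
    then show ?thesis
      using insert.hyps by (simp add: prod.insert)
  qed
  have "(\<Sum>L\<in>Pow (\<Union>g\<in>insert x F. G g). \<Prod>g\<in>insert x F. H g (L \<inter> G g))
        = (\<Sum>L\<in>Pow (G x \<union> ?U). H x (L \<inter> G x) * (\<lambda>Y. \<Prod>g\<in>F. H g (Y \<inter> G g)) (L \<inter> ?U))"
    by (simp only: eq UN_insert)
  also have "\<dots> = (\<Sum>X\<in>Pow (G x). H x X) * (\<Sum>Y\<in>Pow ?U. \<Prod>g\<in>F. H g (Y \<inter> G g))"
    by (rule sum_Pow_split[OF fin disj])
  also have "(\<Sum>Y\<in>Pow ?U. \<Prod>g\<in>F. H g (Y \<inter> G g)) = (\<Prod>g\<in>F. \<Sum>B\<in>Pow (G g). H g B)"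
  proof (rule insert.IH)
    show "\<forall>g\<in>F. finite (G g)" using insert.prems(1) by blast
    show "disjoint_family_on G F" using insert.prems(2) disjoint_family_on_mono[of F "insert x F" G] by blast
  qed
  finally show ?case using insert.hyps by (simp add: prod.insert)
qed

lemma sum_Pow_prod:
  assumes "finite S"
  shows "(\<Sum>B\<in>Pow S. \<Prod>s\<in>S. h s (s \<in> B)) = (\<Prod>s\<in>S. h s True + (h s False :: real))"
proof -
  have "(\<Sum>B\<in>Pow (\<Union>s\<in>S. {s}). \<Prod>s\<in>S. (\<lambda>s X. h s (s \<in> X)) s (B \<inter> {s}))
        = (\<Prod>s\<in>S. \<Sum>X\<in>Pow {s}. (\<lambda>s X. h s (s \<in> X)) s X)"
    by (rule sum_Pow_UNION) (use assms in \<open>auto simp: disjoint_family_on_def\<close>)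
  moreover have "\<And>s. (\<Sum>X\<in>Pow {s}. h s (s \<in> X)) = h s True + h s False"
  proof -
    fix s :: 'a
    have "Pow {s} = {{}, {s}}" by blast
    then show "(\<Sum>X\<in>Pow {s}. h s (s \<in> X)) = h s True + h s False" by simp
  qed
  moreover have "\<And>B s. (s \<in> B \<inter> {s}) = (s \<in> B)" by blast
  ultimately show ?thesis by simp
qed

lemma prod_of_bool: "finite A \<Longrightarrow> (\<Prod>m\<in>A. (of_bool (P m) :: real)) = of_bool (\<forall>m\<in>A. P m)"
  by (induction A rule: finite_induct) auto


definition wq :: "(nat \<Rightarrow> real) \<Rightarrow> nat \<times> nat \<Rightarrow> bool \<Rightarrow> real" where
  "wq q s b = (if b then iota (q (fst s)) (q (snd s)) else 1 - iota (q (fst s)) (q (snd s)))"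
definition wp :: "(nat \<Rightarrow> real) \<Rightarrow> nat \<Rightarrow> bool \<Rightarrow> real" where
  "wp p j b = (if b then p j else 1 - p j)"

lemma finite_offdiag: "finite (offdiag n)"
proof -
  have "offdiag n \<subseteq> {..<n} \<times> {..<n}" unfolding offdiag_def by auto
  then show ?thesis by (rule finite_subset) auto
qed

lemma weight0_empty: "weight n 0 p q D L {} = (\<Prod>j<n. wp p j (j \<in> D)) * (\<Prod>s\<in>offdiag n. wq q s (s \<in> L))"
  unfolding weight_def
  by (intro arg_cong2[where f="(*)"] prod.cong) (auto simp: wp_def wq_def)

lemma weight0_nonempty:
  assumes "M \<subseteq> L" "L \<subseteq> offdiag n" "M \<noteq> {}"
  shows "weight n 0 p q D L M = 0"
proof -
  obtain a b where ab: "(a,b) \<in> M" using assms(3) by auto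
  have "(\<Prod>(i,j)\<in>offdiag n.
        if (i,j) \<notin> L then 1 - iota (q i) (q j)
        else if (i,j) \<in> M then iota (q i) (q j) * 0
        else iota (q i) (q j) * (1 - 0)) = 0"
    by (rule prod_zero) (use finite_offdiag ab assms in \<open>auto intro!: bexI[of _ "(a,b)"]\<close>)
  then show ?thesis unfolding weight_def by simp
qed

lemma expected_PT_0:
  "expected_PT n k 0 p q i = (\<Sum>D\<in>Pow {..<n}. \<Sum>L\<in>Pow (offdiag n).
     (\<Prod>j<n. wp p j (j \<in> D)) * (\<Prod>s\<in>offdiag n. wq q s (s \<in> L)) * real (card (PT n k D L {} i)))"
  unfolding expected_PT_def
proof (intro sum.cong refl)
  fix D L assume L: "L \<in> Pow (offdiag n)"
  have fin: "finite (Pow L)" using L finite_offdiag by (auto intro: finite_subset)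
  have "(\<Sum>M\<in>Pow L. weight n 0 p q D L M * real (card (PT n k D L M i)))
     = weight n 0 p q D L {} * real (card (PT n k D L {} i)) +
       (\<Sum>M\<in>Pow L - {{}}. weight n 0 p q D L M * real (card (PT n k D L M i)))"
    by (rule sum.remove[OF fin]) auto
  also have "(\<Sum>M\<in>Pow L - {{}}. weight n 0 p q D L M * real (card (PT n k D L M i))) = 0"
    by (rule sum.neutral) (use L weight0_nonempty in auto)
  finally show "(\<Sum>M\<in>Pow L. weight n 0 p q D L M * real (card (PT n k D L M i))) =
      (\<Prod>j<n. wp p j (j \<in> D)) * (\<Prod>s\<in>offdiag n. wq q s (s \<in> L)) * real (card (PT n k D L {} i))"
    by (simp add: weight0_empty)
qed

definition Tset :: "nat \<Rightarrow> nat \<Rightarrow> nat \<Rightarrow> nat set set" where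
  "Tset n k i = {t. t \<subseteq> {..<n} \<and> card t = k \<and> i \<in> t}"

definition Gs :: "nat set \<Rightarrow> nat \<Rightarrow> (nat \<times> nat) set" where
  "Gs t m = {m} \<times> (t - {m})"

definition Fm :: "nat \<Rightarrow> nat set \<Rightarrow> nat \<Rightarrow> (nat \<times> nat) set \<Rightarrow> real" where
  "Fm i t m B = (if m = i then of_bool (B = Gs t m) else of_bool (B \<noteq> Gs t m))"

lemma finite_Tset: "finite (Tset n k i)"
  unfolding Tset_def by (rule finite_subset[of _ "Pow {..<n}"]) auto

lemma knows_empty:
  assumes "t \<subseteq> D"
  shows "knows D L {} m t \<longleftrightarrow> Gs t m \<subseteq> L"
  using assms unfolding knows_def learned_def indirect_net_def Gs_def by auto

lemma card_PT:
  assumes "D \<subseteq> {..<n}"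
  shows "real (card (PT n k D L {} i)) =
    (\<Sum>t\<in>Tset n k i. of_bool (t \<subseteq> D) * (\<Prod>m<n. Fm i t m (L \<inter> Gs t m)))"
proof -
  have sub: "PT n k D L {} i \<subseteq> Tset n k i"
    using assms unfolding PT_def Tset_def by auto
  have "(\<Sum>t\<in>Tset n k i. (of_bool (t \<in> PT n k D L {} i) :: real)) = real (card (Tset n k i \<inter> {t. t \<in> PT n k D L {} i}))"
    using finite_Tset by (simp add: sum_of_bool_eq)
  also have "Tset n k i \<inter> {t. t \<in> PT n k D L {} i} = PT n k D L {} i" using sub by blast
  finally have 1: "real (card (PT n k D L {} i)) = (\<Sum>t\<in>Tset n k i. (of_bool (t \<in> PT n k D L {} i) :: real))" by simp
  have 2: "(of_bool (t \<in> PT n k D L {} i) :: real) = of_bool (t \<subseteq> D) * (\<Prod>m<n. Fm i t m (L \<inter> Gs t m))"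
    if t: "t \<in> Tset n k i" for t
  proof (cases "t \<subseteq> D")
    case False
    then show ?thesis unfolding PT_def by auto
  next
    case True
    have "(\<Prod>m<n. Fm i t m (L \<inter> Gs t m)) = (\<Prod>m<n. of_bool (if m = i then Gs t m \<subseteq> L else \<not> Gs t m \<subseteq> L))"
      unfolding Fm_def by (intro prod.cong refl) auto
    also have "\<dots> = of_bool (\<forall>m\<in>{..<n}. if m = i then Gs t m \<subseteq> L else \<not> Gs t m \<subseteq> L)"
      by (rule prod_of_bool) simp
    finally show ?thesis using True t assms knows_empty[OF True]
      unfolding PT_def Tset_def by (auto simp: subset_iff)
  qed
  show ?thesis unfolding 1 by (intro sum.cong refl 2)
qed


lemma sumD:
  assumes "t \<subseteq> {..<n}"
  shows "(\<Sum>D\<in>Pow {..<n}. (\<Prod>j<n. wp p j (j \<in> D)) * of_bool (t \<subseteq> D)) = (\<Prod>j\<in>t. p j)"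
proof -
  define h where "h j b = wp p j b * (if j \<in> t then of_bool b else 1)" for j b
  have eq: "(\<Prod>j<n. wp p j (j \<in> D)) * of_bool (t \<subseteq> D) = (\<Prod>j<n. h j (j \<in> D))" for D
  proof -
    have "(of_bool (t \<subseteq> D) :: real) = of_bool (\<forall>j\<in>{..<n}. j \<in> t \<longrightarrow> j \<in> D)"
      using assms by auto
    also have "\<dots> = (\<Prod>j<n. of_bool (j \<in> t \<longrightarrow> j \<in> D))"
      by (rule prod_of_bool[symmetric]) simp
    also have "\<dots> = (\<Prod>j<n. (if j \<in> t then of_bool (j \<in> D) else 1))"
      by (intro prod.cong refl) auto
    finally show ?thesis unfolding h_def by (simp add: prod.distrib)
  qed
  have "(\<Sum>D\<in>Pow {..<n}. (\<Prod>j<n. wp p j (j \<in> D)) * of_bool (t \<subseteq> D)) = (\<Sum>D\<in>Pow {..<n}. \<Prod>j<n. h j (j \<in> D))"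
    by (simp add: eq)
  also have "\<dots> = (\<Prod>j<n. h j True + h j False)"
    by (rule sum_Pow_prod) simp
  also have "\<dots> = (\<Prod>j<n. if j \<in> t then p j else 1)"
    by (intro prod.cong refl) (simp add: h_def wp_def)
  also have "\<dots> = prod p ({..<n} \<inter> t)"
    by (rule prod.inter_restrict[symmetric]) simp
  also have "{..<n} \<inter> t = t" using assms by blast
  finally show ?thesis .
qed

definition Pi_t :: "(nat \<Rightarrow> real) \<Rightarrow> nat set \<Rightarrow> nat \<Rightarrow> real" where
  "Pi_t q t m = (\<Prod>s\<in>Gs t m. iota (q (fst s)) (q (snd s)))"

lemma finite_Gs: "finite t \<Longrightarrow> finite (Gs t m)"
  unfolding Gs_def by simp

lemma sum_W:
  assumes "finite G"
  shows "(\<Sum>B\<in>Pow G. \<Prod>s\<in>G. wq q s (s \<in> B)) = 1"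
proof -
  have "(\<Sum>B\<in>Pow G. \<Prod>s\<in>G. wq q s (s \<in> B)) = (\<Prod>s\<in>G. wq q s True + wq q s False)"
    by (rule sum_Pow_prod[OF assms])
  also have "\<dots> = 1" by (simp add: wq_def)
  finally show ?thesis .
qed

lemma sum_W_eq:
  assumes "finite G"
  shows "(\<Sum>B\<in>Pow G. (\<Prod>s\<in>G. wq q s (s \<in> B)) * of_bool (B = G)) = (\<Prod>s\<in>G. iota (q (fst s)) (q (snd s)))"
proof -
  have "(\<Sum>B\<in>Pow G. (\<Prod>s\<in>G. wq q s (s \<in> B)) * of_bool (B = G)) =
        (\<Sum>B\<in>Pow G. if B = G then (\<Prod>s\<in>G. wq q s (s \<in> B)) else 0)"
    by (intro sum.cong refl) auto
  also have "\<dots> = (\<Prod>s\<in>G. wq q s (s \<in> G))"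
    using assms by (simp add: sum.delta)
  also have "\<dots> = (\<Prod>s\<in>G. iota (q (fst s)) (q (snd s)))"
    by (intro prod.cong refl) (simp add: wq_def)
  finally show ?thesis .
qed

lemma sum_W_neq:
  assumes "finite G"
  shows "(\<Sum>B\<in>Pow G. (\<Prod>s\<in>G. wq q s (s \<in> B)) * of_bool (B \<noteq> G)) = 1 - (\<Prod>s\<in>G. iota (q (fst s)) (q (snd s)))"
proof -
  have "(\<Sum>B\<in>Pow G. (\<Prod>s\<in>G. wq q s (s \<in> B)) * of_bool (B \<noteq> G)) =
        (\<Sum>B\<in>Pow G. (\<Prod>s\<in>G. wq q s (s \<in> B))) - (\<Sum>B\<in>Pow G. (\<Prod>s\<in>G. wq q s (s \<in> B)) * of_bool (B = G))"
  proof -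
    have "(\<Sum>B\<in>Pow G. (\<Prod>s\<in>G. wq q s (s \<in> B)) * of_bool (B \<noteq> G)) =
        (\<Sum>B\<in>Pow G. (\<Prod>s\<in>G. wq q s (s \<in> B)) - (\<Prod>s\<in>G. wq q s (s \<in> B)) * of_bool (B = G))"
      by (intro sum.cong refl) auto
    also have "\<dots> = (\<Sum>B\<in>Pow G. (\<Prod>s\<in>G. wq q s (s \<in> B))) - (\<Sum>B\<in>Pow G. (\<Prod>s\<in>G. wq q s (s \<in> B)) * of_bool (B = G))"
      by (rule sum_subtractf)
    finally show ?thesis .
  qed
  then show ?thesis using sum_W[OF assms] sum_W_eq[OF assms] by simp
qed

lemma sumL:
  assumes t: "t \<subseteq> {..<n}" and i: "i < n"
  shows "(\<Sum>L\<in>Pow (offdiag n). (\<Prod>s\<in>offdiag n. wq q s (s \<in> L)) * (\<Prod>m<n. Fm i t m (L \<inter> Gs t m)))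
       = (\<Prod>m<n. if m = i then Pi_t q t m else 1 - Pi_t q t m)"
proof -
  have fint: "finite t" using t finite_subset by blast
  define R where "R = offdiag n - (\<Union>m<n. Gs t m)"
  define G' where "G' m = (if m < n then Gs t m else R)" for m
  define H where "H m B = (\<Prod>s\<in>G' m. wq q s (s \<in> B)) * (if m < n then Fm i t m B else 1)" for m B
  have Gsub: "Gs t m \<subseteq> offdiag n" if "m < n" for m
    using that t unfolding Gs_def offdiag_def by auto
  have UG: "(\<Union>m\<in>{..n}. G' m) = offdiag n"
  proof -
    have "{..n} = insert n {..<n}" by auto
    then have "(\<Union>m\<in>{..n}. G' m) = R \<union> (\<Union>m<n. Gs t m)" unfolding G'_def by auto
    then show ?thesis unfolding R_def using Gsub by blast
  qed
  have finG: "\<forall>m\<in>{..n}. finite (G' m)"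
    unfolding G'_def R_def using finite_offdiag fint finite_Gs by auto
  have disj: "disjoint_family_on G' {..n}"
    unfolding disjoint_family_on_def G'_def R_def Gs_def by auto
  have disj2: "\<forall>a\<in>{..n}. \<forall>b\<in>{..n}. a \<noteq> b \<longrightarrow> G' a \<inter> G' b = {}"
    using disj unfolding disjoint_family_on_def by blast
  have eqL: "(\<Prod>s\<in>offdiag n. wq q s (s \<in> L)) * (\<Prod>m<n. Fm i t m (L \<inter> Gs t m)) = (\<Prod>m\<in>{..n}. H m (L \<inter> G' m))" for L
  proof -
    have A: "(\<Prod>s\<in>offdiag n. wq q s (s \<in> L)) = (\<Prod>m\<in>{..n}. \<Prod>s\<in>G' m. wq q s (s \<in> L))"
      unfolding UG[symmetric] by (rule prod.UNION_disjoint) (use finG disj2 in auto)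
    have B: "(\<Prod>m\<in>{..n}. \<Prod>s\<in>G' m. wq q s (s \<in> L)) = (\<Prod>m\<in>{..n}. \<Prod>s\<in>G' m. wq q s (s \<in> L \<inter> G' m))"
      by (intro prod.cong refl) auto
    have C: "(\<Prod>m<n. Fm i t m (L \<inter> Gs t m)) = (\<Prod>m\<in>{..n}. (if m < n then Fm i t m (L \<inter> G' m) else 1))"
    proof -
      have "{..n} = insert n {..<n}" by auto
      then have "(\<Prod>m\<in>{..n}. (if m < n then Fm i t m (L \<inter> G' m) else 1)) = (\<Prod>m<n. Fm i t m (L \<inter> G' m))"
        by simp
      also have "\<dots> = (\<Prod>m<n. Fm i t m (L \<inter> Gs t m))"
        by (intro prod.cong refl) (simp add: G'_def)
      finally show ?thesis by simp
    qed
    show ?thesis unfolding A B C H_def by (simp add: prod.distrib)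
  qed
  have "(\<Sum>L\<in>Pow (offdiag n). (\<Prod>s\<in>offdiag n. wq q s (s \<in> L)) * (\<Prod>m<n. Fm i t m (L \<inter> Gs t m)))
      = (\<Sum>L\<in>Pow (\<Union>m\<in>{..n}. G' m). \<Prod>m\<in>{..n}. H m (L \<inter> G' m))"
    unfolding UG by (simp add: eqL)
  also have "\<dots> = (\<Prod>m\<in>{..n}. \<Sum>B\<in>Pow (G' m). H m B)"
    by (rule sum_Pow_UNION) (use finG disj in auto)
  also have "\<dots> = (\<Prod>m\<in>{..n}. if m < n then (if m = i then Pi_t q t m else 1 - Pi_t q t m) else 1)"
  proof (intro prod.cong refl)
    fix m assume "m \<in> {..n}"
    show "(\<Sum>B\<in>Pow (G' m). H m B) = (if m < n then (if m = i then Pi_t q t m else 1 - Pi_t q t m) else 1)"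
    proof (cases "m < n")
      case True
      have fG: "finite (Gs t m)" using finite_Gs fint by blast
      show ?thesis
      proof (cases "m = i")
        case True
        then show ?thesis using \<open>m < n\<close> sum_W_eq[OF fG, of q]
          unfolding H_def G'_def Fm_def Pi_t_def by simp
      next
        case False
        then show ?thesis using \<open>m < n\<close> sum_W_neq[OF fG, of q]
          unfolding H_def G'_def Fm_def Pi_t_def by simp
      qed
    next
      case False
      have "finite R" unfolding R_def using finite_offdiag by simp
      then show ?thesis using False sum_W[of R q] unfolding H_def G'_def by simp
    qed
  qed
  also have "\<dots> = (\<Prod>m<n. if m = i then Pi_t q t m else 1 - Pi_t q t m)"
  proof -
    have "{..n} = insert n {..<n}" by auto
    then have "(\<Prod>m\<in>{..n}. if m < n then (if m = i then Pi_t q t m else 1 - Pi_t q t m) else 1)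
       = (\<Prod>m<n. if m < n then (if m = i then Pi_t q t m else 1 - Pi_t q t m) else 1)" by simp
    also have "\<dots> = (\<Prod>m<n. if m = i then Pi_t q t m else 1 - Pi_t q t m)"
      by (intro prod.cong refl) auto
    finally show ?thesis .
  qed
  finally show ?thesis .
qed

lemma expected_PT_formula:
  assumes i: "i < n"
  shows "expected_PT n k 0 p q i =
    (\<Sum>t\<in>Tset n k i. (\<Prod>j\<in>t. p j) * (\<Prod>m<n. if m = i then Pi_t q t m else 1 - Pi_t q t m))"
proof -
  let ?WD = "\<lambda>D. (\<Prod>j<n. wp p j (j \<in> D))"
  let ?WL = "\<lambda>L. (\<Prod>s\<in>offdiag n. wq q s (s \<in> L))"
  let ?F = "\<lambda>t L. (\<Prod>m<n. Fm i t m (L \<inter> Gs t m))"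
  have "expected_PT n k 0 p q i = (\<Sum>D\<in>Pow {..<n}. \<Sum>L\<in>Pow (offdiag n).
      ?WD D * ?WL L * (\<Sum>t\<in>Tset n k i. of_bool (t \<subseteq> D) * ?F t L))"
    unfolding expected_PT_0 by (intro sum.cong refl) (simp add: card_PT)
  also have "\<dots> = (\<Sum>D\<in>Pow {..<n}. \<Sum>L\<in>Pow (offdiag n). \<Sum>t\<in>Tset n k i.
      (?WD D * of_bool (t \<subseteq> D)) * (?WL L * ?F t L))"
    by (simp add: sum_distrib_left mult_ac)
  also have "\<dots> = (\<Sum>D\<in>Pow {..<n}. \<Sum>t\<in>Tset n k i. \<Sum>L\<in>Pow (offdiag n).
      (?WD D * of_bool (t \<subseteq> D)) * (?WL L * ?F t L))"
    by (intro sum.cong refl) (rule sum.swap)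
  also have "\<dots> = (\<Sum>t\<in>Tset n k i. \<Sum>D\<in>Pow {..<n}. \<Sum>L\<in>Pow (offdiag n).
      (?WD D * of_bool (t \<subseteq> D)) * (?WL L * ?F t L))"
    by (rule sum.swap)
  also have "\<dots> = (\<Sum>t\<in>Tset n k i. (\<Sum>D\<in>Pow {..<n}. ?WD D * of_bool (t \<subseteq> D)) * (\<Sum>L\<in>Pow (offdiag n). ?WL L * ?F t L))"
    by (simp only: sum_product)
  also have "\<dots> = (\<Sum>t\<in>Tset n k i. (\<Prod>j\<in>t. p j) * (\<Prod>m<n. if m = i then Pi_t q t m else 1 - Pi_t q t m))"
  proof (intro sum.cong refl)
    fix t assume "t \<in> Tset n k i"
    then have t: "t \<subseteq> {..<n}" unfolding Tset_def by auto
    show "(\<Sum>D\<in>Pow {..<n}. ?WD D * of_bool (t \<subseteq> D)) * (\<Sum>L\<in>Pow (offdiag n). ?WL L * ?F t L) =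
       (\<Prod>j\<in>t. p j) * (\<Prod>m<n. if m = i then Pi_t q t m else 1 - Pi_t q t m)"
      using sumD[OF t, of p] sumL[OF t i, of q] by simp
  qed
  finally show ?thesis .
qed


definition Ef :: "nat \<Rightarrow> nat \<Rightarrow> real \<Rightarrow> real \<Rightarrow> real \<Rightarrow> real \<Rightarrow> real" where
  "Ef n k p q a b = real ((n-1) choose (k-1)) * (a * p^(k-1)) *
     ((b*q)^(k-1) * (1 - q*b*(q*q)^(k-2))^(k-1) * (1 - q*b*(q*q)^(k-1))^(n-k))"

lemma Pi_t_alt: "Pi_t q t m = (\<Prod>j\<in>t-{m}. iota (q m) (q j))"
proof -
  have "Gs t m = Pair m ` (t - {m})" unfolding Gs_def by auto
  moreover have "inj_on (Pair m) (t - {m})" by (auto simp: inj_on_def)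
  ultimately show ?thesis unfolding Pi_t_def by (simp add: prod.reindex)
qed

lemma card_Tset:
  assumes "i < n" "k \<ge> 1"
  shows "card (Tset n k i) = (n-1) choose (k-1)"
proof -
  let ?S = "{B. B \<subseteq> {..<n}-{i} \<and> card B = k-1}"
  have eq: "Tset n k i = insert i ` ?S"
  proof
    show "Tset n k i \<subseteq> insert i ` ?S"
    proof
      fix t assume t: "t \<in> Tset n k i"
      then have fin: "finite t" unfolding Tset_def using finite_subset by blast
      have "t = insert i (t - {i})" using t unfolding Tset_def by auto
      moreover have "t - {i} \<in> ?S" using t fin unfolding Tset_def by auto
      ultimately show "t \<in> insert i ` ?S" by blast
    qed
  next
    show "insert i ` ?S \<subseteq> Tset n k i"
    proof
      fix t assume "t \<in> insert i ` ?S"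
      then obtain B where B: "B \<subseteq> {..<n}-{i}" "card B = k-1" "t = insert i B" by blast
      have "finite B" using B(1) finite_subset by blast
      have "i \<notin> B" using B(1) by blast
      then have "card t = k" using B assms \<open>finite B\<close> by simp
      then show "t \<in> Tset n k i" using B assms unfolding Tset_def by auto
    qed
  qed
  have inj: "inj_on (insert i) ?S"
  proof (rule inj_onI)
    fix X Y assume "X \<in> ?S" "Y \<in> ?S" "insert i X = insert i Y"
    then show "X = Y" by (metis Diff_insert_absorb Diff_iff insertI1 mem_Collect_eq subset_iff)
  qed
  have "card (Tset n k i) = card ?S" unfolding eq by (rule card_image[OF inj])
  also have "\<dots> = card ({..<n}-{i}) choose (k-1)" by (rule n_subsets) simp
  also have "card ({..<n}-{i}) = n - 1" using assms by simp
  finally show ?thesis .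
qed

lemma expected_dev:
  assumes k: "k \<ge> 2" and i: "i < n"
  shows "expected_PT n k 0 ((\<lambda>_. p)(i := a)) ((\<lambda>_. q)(i := b)) i = Ef n k p q a b"
proof -
  let ?p = "(\<lambda>_. p)(i := a)" and ?q = "(\<lambda>_. q)(i := b)"
  let ?V = "(b*q)^(k-1) * (1 - q*b*(q*q)^(k-2))^(k-1) * (1 - q*b*(q*q)^(k-1))^(n-k)"
  have per: "(\<Prod>j\<in>t. ?p j) * (\<Prod>m<n. if m = i then Pi_t ?q t m else 1 - Pi_t ?q t m) = (a * p^(k-1)) * ?V"
    if tT: "t \<in> Tset n k i" for t
  proof -
    have t: "t \<subseteq> {..<n}" "card t = k" "i \<in> t" using tT unfolding Tset_def by auto
    have fin: "finite t" using t(1) finite_subset by blast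
    have ct: "card (t - {i}) = k - 1" using t by simp
    have P1: "(\<Prod>j\<in>t. ?p j) = a * p^(k-1)"
    proof -
      have "(\<Prod>j\<in>t. ?p j) = ?p i * (\<Prod>j\<in>t-{i}. ?p j)" by (rule prod.remove[OF fin t(3)])
      also have "(\<Prod>j\<in>t-{i}. ?p j) = (\<Prod>j\<in>t-{i}. p)" by (intro prod.cong refl) auto
      finally show ?thesis using ct by simp
    qed
    have Pii: "Pi_t ?q t i = (b*q)^(k-1)"
    proof -
      have "Pi_t ?q t i = (\<Prod>j\<in>t-{i}. iota b q)" unfolding Pi_t_alt by (intro prod.cong refl) auto
      then show ?thesis using ct by (simp add: iota_def)
    qed
    have Pin: "Pi_t ?q t m = q*b*(q*q)^(k-2)" if m: "m \<in> t" "m \<noteq> i" for m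
    proof -
      have fm: "finite (t - {m})" using fin by simp
      have im: "i \<in> t - {m}" using m t by auto
      have "Pi_t ?q t m = (\<Prod>j\<in>t-{m}. iota (?q m) (?q j))" by (rule Pi_t_alt)
      also have "\<dots> = iota (?q m) (?q i) * (\<Prod>j\<in>t-{m}-{i}. iota (?q m) (?q j))" by (rule prod.remove[OF fm im])
      also have "(\<Prod>j\<in>t-{m}-{i}. iota (?q m) (?q j)) = (\<Prod>j\<in>t-{m}-{i}. q*q)"
        by (intro prod.cong refl) (use m in \<open>auto simp: iota_def\<close>)
      finally have "Pi_t ?q t m = iota (?q m) (?q i) * (\<Prod>j\<in>t-{m}-{i}. q*q)" .
      moreover have "card (t-{m}-{i}) = k - 2" using m t by simp
      ultimately show ?thesis using m by (simp add: iota_def)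
    qed
    have Pout: "Pi_t ?q t m = q*b*(q*q)^(k-1)" if m: "m \<notin> t" for m
    proof -
      have mi: "m \<noteq> i" using m t by auto
      have "Pi_t ?q t m = (\<Prod>j\<in>t. iota (?q m) (?q j))" unfolding Pi_t_alt using m by simp
      also have "\<dots> = iota (?q m) (?q i) * (\<Prod>j\<in>t-{i}. iota (?q m) (?q j))" by (rule prod.remove[OF fin t(3)])
      also have "(\<Prod>j\<in>t-{i}. iota (?q m) (?q j)) = (\<Prod>j\<in>t-{i}. q*q)"
        by (intro prod.cong refl) (use mi in \<open>auto simp: iota_def\<close>)
      finally have "Pi_t ?q t m = iota (?q m) (?q i) * (\<Prod>j\<in>t-{i}. q*q)" .
      then show ?thesis using mi ct by (simp add: iota_def)
    qed
    let ?f = "\<lambda>m. if m = i then Pi_t ?q t m else 1 - Pi_t ?q t m"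
    have "(\<Prod>m<n. ?f m) = (\<Prod>m\<in>{..<n}-t. ?f m) * (\<Prod>m\<in>t. ?f m)"
      by (rule prod.subset_diff[OF t(1)]) simp
    also have "(\<Prod>m\<in>{..<n}-t. ?f m) = (\<Prod>m\<in>{..<n}-t. 1 - q*b*(q*q)^(k-1))"
      by (intro prod.cong refl) (use Pout t in auto)
    also have "\<dots> = (1 - q*b*(q*q)^(k-1))^(n-k)"
      using t fin by (simp add: card_Diff_subset)
    also have "(\<Prod>m\<in>t. ?f m) = ?f i * (\<Prod>m\<in>t-{i}. ?f m)" by (rule prod.remove[OF fin t(3)])
    also have "(\<Prod>m\<in>t-{i}. ?f m) = (\<Prod>m\<in>t-{i}. 1 - q*b*(q*q)^(k-2))"
      by (intro prod.cong refl) (use Pin in auto)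
    also have "\<dots> = (1 - q*b*(q*q)^(k-2))^(k-1)" using ct by simp
    finally have "(\<Prod>m<n. ?f m) = ?V" using Pii by simp
    then show ?thesis using P1 by simp
  qed
  have "expected_PT n k 0 ?p ?q i = (\<Sum>t\<in>Tset n k i. (a * p^(k-1)) * ?V)"
    unfolding expected_PT_formula[OF i] by (intro sum.cong refl per)
  also have "\<dots> = real (card (Tset n k i)) * ((a * p^(k-1)) * ?V)" by simp
  also have "\<dots> = Ef n k p q a b" using card_Tset[OF i] k by (simp add: Ef_def mult_ac)
  finally show ?thesis .
qed


definition Gf :: "nat \<Rightarrow> nat \<Rightarrow> real \<Rightarrow> real \<Rightarrow> real" where
  "Gf n k q b = (b*q)^(k-1) * (1 - q*b*(q*q)^(k-2))^(k-1) * (1 - q*b*(q*q)^(k-1))^(n-k)"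

definition hf :: "nat \<Rightarrow> nat \<Rightarrow> real \<Rightarrow> real" where
  "hf n k q = real (k-1) * (1 - 2*(q*q)^(k-1)) * (1 - (q*q)^k) - real (n-k) * (q*q)^k * (1 - (q*q)^(k-1))"

lemma Ef_Gf: "Ef n k p q a b = real ((n-1) choose (k-1)) * (a * p^(k-1)) * Gf n k q b"
  unfolding Ef_def Gf_def by simp

lemma qalpha: "k \<ge> 2 \<Longrightarrow> (q::real) * (q * (q*q)^(k-2)) = (q*q)^(k-1)"
proof -
  assume "k \<ge> 2"
  then obtain j where j: "k = Suc (Suc j)" by (metis add_2_eq_Suc le_Suc_ex)
  show ?thesis by (simp add: j power_Suc mult_ac)
qed

lemma qbeta: "k \<ge> 2 \<Longrightarrow> (q::real) * (q * (q*q)^(k-1)) = (q*q)^k"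
proof -
  assume "k \<ge> 2"
  then obtain j where j: "k = Suc (Suc j)" by (metis add_2_eq_Suc le_Suc_ex)
  show ?thesis by (simp add: j power_Suc mult_ac)
qed

lemma pow_le_exp: "0 \<le> (\<rho>::real) \<Longrightarrow> \<rho>^m \<le> exp (real m * (\<rho> - 1))"
proof -
  assume r: "0 \<le> \<rho>"
  have "\<rho> \<le> exp (\<rho> - 1)" using exp_ge_add_one_self[of "\<rho> - 1"] by simp
  then have "\<rho>^m \<le> exp (\<rho> - 1)^m" by (rule power_mono) fact
  also have "exp (\<rho> - 1)^m = exp (real m * (\<rho> - 1))" by (simp add: exp_of_nat_mult)
  finally show ?thesis .
qed

lemma expo_identity: fixes q y z b m r :: real assumes "q \<noteq> 0" "1 - y \<noteq> 0" "1 - z \<noteq> 0"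
  shows "m * (b / q - 1) + m * ((1 - y / q * b) / (1 - y) - 1) + r * ((1 - z / q * b) / (1 - z) - 1) =
    (b - q) * (m * (1 - 2 * y) * (1 - z) - r * z * (1 - y)) / (q * (1 - y) * (1 - z))"
proof -
  define d where "d = q * (1 - y) * (1 - z)"
  have d: "d \<noteq> 0" using assms unfolding d_def by simp
  have "m * (b / q - 1) + m * ((1 - y / q * b) / (1 - y) - 1) + r * ((1 - z / q * b) / (1 - z) - 1)
    = m * (b - q) / q - m * y * (b - q) / (q * (1 - y)) - r * z * (b - q) / (q * (1 - z))"
    using assms by (simp add: field_simps)
  also have "\<dots> = (m * (b - q) / q - m * y * (b - q) / (q * (1 - y)) - r * z * (b - q) / (q * (1 - z))) * d / d"
    using d by simp
  also have "(m * (b - q) / q - m * y * (b - q) / (q * (1 - y)) - r * z * (b - q) / (q * (1 - z))) * d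
     = m * (b - q) / q * d - m * y * (b - q) / (q * (1 - y)) * d - r * z * (b - q) / (q * (1 - z)) * d"
    by (simp add: algebra_simps)
  also have "m * (b - q) / q * d = m * (b - q) * ((1 - y) * (1 - z))"
    unfolding d_def using assms by simp
  also have "m * y * (b - q) / (q * (1 - y)) * d = m * y * (b - q) * (1 - z)"
    unfolding d_def using assms by simp
  also have "r * z * (b - q) / (q * (1 - z)) * d = r * z * (b - q) * (1 - y)"
    unfolding d_def using assms by simp
  also have "(m * (b - q) * ((1 - y) * (1 - z)) - m * y * (b - q) * (1 - z) - r * z * (b - q) * (1 - y)) / d
     = (b - q) * (m * (1 - 2 * y) * (1 - z) - r * z * (1 - y)) / d"
    by (simp add: algebra_simps)
  finally show ?thesis unfolding d_def .
qed

lemma Gf_max: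
  assumes k: "k \<ge> 2" and q: "0 < q" "q < 1" and h: "hf n k q = 0" and b: "0 \<le> b" "b \<le> 1"
  shows "Gf n k q b \<le> Gf n k q q"
proof -
  define y where "y = (q*q)^(k-1)"
  define z where "z = (q*q)^k"
  define \<alpha> where "\<alpha> = q*(q*q)^(k-2)"
  define \<beta> where "\<beta> = q*(q*q)^(k-1)"
  define m where "m = k - 1"
  define r where "r = n - k"
  have qa: "q*\<alpha> = y" unfolding \<alpha>_def y_def using qalpha[OF k] by simp
  have qb: "q*\<beta> = z" unfolding \<beta>_def z_def using qbeta[OF k] by simp
  have qq: "0 < q*q" "q*q < 1" using q mult_strict_mono[of q 1 q 1] by auto
  have y01: "0 < y" "y < 1" unfolding y_def using qq k by (auto simp: power_less_one_iff)
  have z01: "0 < z" "z < 1" unfolding z_def using qq k by (auto simp: power_less_one_iff)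
  have a01: "0 \<le> \<alpha>" "\<alpha> < 1"
  proof -
    show "0 \<le> \<alpha>" unfolding \<alpha>_def using q by simp
    have "(q*q)^(k-2) \<le> 1" using qq by (simp add: power_le_one)
    then have "\<alpha> \<le> q" unfolding \<alpha>_def using q by (simp add: mult_left_le)
    then show "\<alpha> < 1" using q by simp
  qed
  have b01: "0 \<le> \<beta>" "\<beta> < 1"
  proof -
    show "0 \<le> \<beta>" unfolding \<beta>_def using q by simp
    have "(q*q)^(k-1) \<le> 1" using qq by (simp add: power_le_one)
    then have "\<beta> \<le> q" unfolding \<beta>_def using q by (simp add: mult_left_le)
    then show "\<beta> < 1" using q by simp
  qed
  have Ab: "0 \<le> 1 - \<alpha>*b" using a01 b by (smt (verit) mult_le_one)
  have Bb: "0 \<le> 1 - \<beta>*b" using b01 b by (smt (verit) mult_le_one)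
  define \<rho>1 where "\<rho>1 = b / q"
  define \<rho>2 where "\<rho>2 = (1 - \<alpha>*b) / (1 - y)"
  define \<rho>3 where "\<rho>3 = (1 - \<beta>*b) / (1 - z)"
  have r1: "0 \<le> \<rho>1" unfolding \<rho>1_def using b q by simp
  have r2: "0 \<le> \<rho>2" unfolding \<rho>2_def using Ab y01 by simp
  have r3: "0 \<le> \<rho>3" unfolding \<rho>3_def using Bb z01 by simp
  have Gq: "Gf n k q q = (q*q)^m * (1-y)^m * (1-z)^r"
    unfolding Gf_def m_def r_def y_def z_def using qalpha[OF k] qbeta[OF k] by (simp add: mult_ac)
  have Gb: "Gf n k q b = (q*q*\<rho>1)^m * ((1-y)*\<rho>2)^m * ((1-z)*\<rho>3)^r"
  proof -
    have e1: "b*q = q*q*\<rho>1" unfolding \<rho>1_def using q by simp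
    have e2: "1 - q*b*(q*q)^(k-2) = (1-y)*\<rho>2" unfolding \<rho>2_def \<alpha>_def using y01 by (simp add: mult_ac)
    have e3: "1 - q*b*(q*q)^(k-1) = (1-z)*\<rho>3" unfolding \<rho>3_def \<beta>_def using z01 by (simp add: mult_ac)
    show ?thesis unfolding Gf_def m_def r_def by (simp only: e1 e2 e3)
  qed
  have Gq0: "0 \<le> Gf n k q q" unfolding Gq using y01 z01 by simp
  have "Gf n k q b = Gf n k q q * (\<rho>1^m * \<rho>2^m * \<rho>3^r)"
    unfolding Gb Gq by (simp add: power_mult_distrib mult_ac)
  also have "\<dots> \<le> Gf n k q q * (exp (real m * (\<rho>1 - 1)) * exp (real m * (\<rho>2 - 1)) * exp (real r * (\<rho>3 - 1)))"
    by (intro mult_left_mono mult_mono pow_le_exp r1 r2 r3 Gq0) (auto simp: r1 r2 r3)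
  also have "exp (real m * (\<rho>1 - 1)) * exp (real m * (\<rho>2 - 1)) * exp (real r * (\<rho>3 - 1))
      = exp (real m * (\<rho>1 - 1) + real m * (\<rho>2 - 1) + real r * (\<rho>3 - 1))"
    by (simp add: exp_add)
  also have "real m * (\<rho>1 - 1) + real m * (\<rho>2 - 1) + real r * (\<rho>3 - 1) = (b - q) * hf n k q / (q * (1-y) * (1-z))"
  proof -
    have a': "\<alpha> = y / q" using qa q by (simp add: field_simps)
    have b': "\<beta> = z / q" using qb q by (simp add: field_simps)
    have hh: "hf n k q = real m * (1 - 2*y) * (1 - z) - real r * z * (1 - y)"
      unfolding hf_def m_def r_def y_def z_def by simp
    show ?thesis unfolding \<rho>1_def \<rho>2_def \<rho>3_def a' b' hh
      by (rule expo_identity) (use q y01 z01 in auto)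
  qed
  finally show ?thesis using h by simp
qed


lemma sym_iff:
  assumes k: "k \<ge> 2" and n: "0 < n"
  shows "sym_inv_eq k 0 c n p q \<longleftrightarrow> 0 < p \<and> admissible p q \<and>
     (\<forall>a b. admissible a b \<longrightarrow> Ef n k p q a b - c a \<le> Ef n k p q p q - c p)"
proof -
  have dev: "payoff n k 0 c ((\<lambda>_. p)(i := a)) ((\<lambda>_. q)(i := b)) i = Ef n k p q a b - c a" if "i < n" for i a b
    unfolding payoff_def using expected_dev[OF k that] by simp
  have sym: "payoff n k 0 c (\<lambda>_. p) (\<lambda>_. q) i = Ef n k p q p q - c p" if "i < n" for i
  proof -
    have "(\<lambda>_. p) = (\<lambda>_. p)(i := p)" "(\<lambda>_. q) = (\<lambda>_. q)(i := q)" by auto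
    then have "payoff n k 0 c (\<lambda>_. p) (\<lambda>_. q) i = payoff n k 0 c ((\<lambda>_. p)(i := p)) ((\<lambda>_. q)(i := q)) i"
      by metis
    then show ?thesis using dev[OF that] by simp
  qed
  show ?thesis
    unfolding sym_inv_eq_def nash_eq_def using dev sym n by auto
qed

lemma deriv_G:
  fixes q X1 X2 x :: real and m r :: nat
  shows "((\<lambda>b. (b*q)^m * (1 - q*b*X1)^m * (1 - q*b*X2)^r) has_real_derivative
    (real m*(x*q)^(m-1)*q * (1 - q*x*X1)^m * (1 - q*x*X2)^r
     + (x*q)^m * (real m * (1 - q*x*X1)^(m-1) * (-(q*X1))) * (1 - q*x*X2)^r
     + (x*q)^m * (1 - q*x*X1)^m * (real r * (1 - q*x*X2)^(r-1) * (-(q*X2))))) (at x)"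
  apply (rule derivative_eq_intros refl)+
  apply (simp add: algebra_simps)
  done

lemma deriv_factor:
  fixes q X1 X2 x A B :: real and m' r' :: nat
  shows "real (Suc m')*(x*q)^(Suc m'-1)*q * A^Suc m' * B^Suc r'
     + (x*q)^Suc m' * (real (Suc m') * A^(Suc m'-1) * (-(q*X1))) * B^Suc r'
     + (x*q)^Suc m' * A^Suc m' * (real (Suc r') * B^(Suc r'-1) * (-(q*X2)))
   = (x*q)^m' * A^m' * B^r' * (real (Suc m')*q*A*B - (x*q)*real (Suc m')*(q*X1)*B - (x*q)*A*real (Suc r')*(q*X2))"
proof -
  define P where "P = (x*q)^m' * A^m' * B^r'"
  have "real (Suc m')*(x*q)^(Suc m'-1)*q * A^Suc m' * B^Suc r' = P * (real (Suc m')*q*A*B)"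
    unfolding P_def by (simp add: power_Suc mult_ac)
  moreover have "(x*q)^Suc m' * (real (Suc m') * A^(Suc m'-1) * (-(q*X1))) * B^Suc r' = - (P * ((x*q)*real (Suc m')*(q*X1)*B))"
    unfolding P_def by (simp add: power_Suc mult_ac)
  moreover have "(x*q)^Suc m' * A^Suc m' * (real (Suc r') * B^(Suc r'-1) * (-(q*X2))) = - (P * ((x*q)*A*real (Suc r')*(q*X2)))"
    unfolding P_def by (simp add: power_Suc mult_ac)
  ultimately show ?thesis unfolding P_def[symmetric] by (simp add: algebra_simps)
qed

lemma eq_necessary:
  assumes k: "k \<ge> 2" and n: "n > k" and c: "cost_ok c" and eq: "sym_inv_eq k 0 c n p q"
  shows "0 < q \<and> q < 1 \<and> hf n k q = 0"
proof -
  have n0: "0 < n" using n by simp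
  note E = eq[unfolded sym_iff[OF k n0]]
  have p: "0 < p" "p < 1" and q01: "0 \<le> q" "q \<le> 1" using E unfolding admissible_def by auto
  have opt: "\<And>a b. admissible a b \<Longrightarrow> Ef n k p q a b - c a \<le> Ef n k p q p q - c p" using E by blast
  have smono: "strict_mono_on {0..<1} c" and c0: "c 0 = 0" using c unfolding cost_ok_def by auto
  have cp: "c 0 < c p" using strict_mono_onD[OF smono, of 0 p] p by auto
  define C where "C = real ((n-1) choose (k-1))"
  have C: "0 < C" unfolding C_def using n k by simp
  have q0: "0 < q"
  proof (rule ccontr)
    assume "\<not> 0 < q"
    then have "q = 0" using q01 by simp
    then have "\<And>a b. Ef n k p q a b = 0" using k unfolding Ef_def by (simp add: power_0_left)
    then have "0 - c 0 \<le> 0 - c p" using opt[of 0 0] unfolding admissible_def by simp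
    then show False using cp by simp
  qed
  have Gmax: "Gf n k q b \<le> Gf n k q q" if b: "0 \<le> b" "b \<le> 1" for b
  proof -
    have "Ef n k p q p b - c p \<le> Ef n k p q p q - c p" using opt[of p b] p b unfolding admissible_def by simp
    then have "C * (p * p^(k-1)) * Gf n k q b \<le> C * (p * p^(k-1)) * Gf n k q q"
      unfolding Ef_Gf C_def by simp
    moreover have "0 < C * (p * p^(k-1))" using C p by simp
    ultimately show ?thesis using mult_le_cancel_left_pos by blast
  qed
  have q1: "q < 1"
  proof (rule ccontr)
    assume "\<not> q < 1"
    then have "q = 1" using q01 by simp
    then have "Gf n k q q = 0" using k unfolding Gf_def by (simp add: power_0_left)
    moreover have "Gf n k q (1/2) > 0" using \<open>q = 1\<close> k n unfolding Gf_def by simp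
    ultimately show False using Gmax[of "1/2"] by simp
  qed
  define m' where "m' = k - 2"
  have m': "k - 1 = Suc m'" using k unfolding m'_def by simp
  define r' where "r' = n - k - 1"
  have r': "n - k = Suc r'" using n unfolding r'_def by simp
  define X1 where "X1 = (q*q)^(k-2)"
  define X2 where "X2 = (q*q)^(k-1)"
  define y where "y = (q*q)^(k-1)"
  define z where "z = (q*q)^k"
  have Gdef: "Gf n k q = (\<lambda>b. (b*q)^(k-1) * (1 - q*b*X1)^(k-1) * (1 - q*b*X2)^(n-k))"
    unfolding Gf_def X1_def X2_def by simp
  define D where "D = real (k-1)*(q*q)^(k-1-1)*q * (1 - q*q*X1)^(k-1) * (1 - q*q*X2)^(n-k)
     + (q*q)^(k-1) * (real (k-1) * (1 - q*q*X1)^(k-1-1) * (-(q*X1))) * (1 - q*q*X2)^(n-k)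
     + (q*q)^(k-1) * (1 - q*q*X1)^(k-1) * (real (n-k) * (1 - q*q*X2)^(n-k-1) * (-(q*X2)))"
  have der: "(Gf n k q has_real_derivative D) (at q)"
    unfolding Gdef D_def by (rule deriv_G)
  have D0: "D = 0"
  proof (rule DERIV_local_max[OF der])
    show "0 < min q (1 - q)" using q0 q1 by simp
    show "\<forall>y. \<bar>q - y\<bar> < min q (1 - q) \<longrightarrow> Gf n k q y \<le> Gf n k q q"
      using Gmax by (auto simp: abs_if split: if_splits)
  qed
  have qy: "q*q*X1 = y" unfolding X1_def y_def using qalpha[OF k, of q] by (simp add: mult_ac)
  have qz: "q*q*X2 = z" unfolding X2_def z_def using qbeta[OF k, of q] by (simp add: mult_ac)
  have qq: "0 < q*q" "q*q < 1" using q0 q1 mult_strict_mono[of q 1 q 1] by auto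
  have y01: "0 < y" "y < 1" unfolding y_def using qq k by (auto simp: power_less_one_iff)
  have z01: "0 < z" "z < 1" unfolding z_def using qq k by (auto simp: power_less_one_iff)
  have "D = (q*q)^m' * (1-y)^m' * (1-z)^r' * (real (Suc m')*q*(1-y)*(1-z) - (q*q)*real (Suc m')*(q*X1)*(1-z) - (q*q)*(1-y)*real (Suc r')*(q*X2))"
    unfolding D_def m' r' qy qz by (rule deriv_factor)
  also have "real (Suc m')*q*(1-y)*(1-z) - (q*q)*real (Suc m')*(q*X1)*(1-z) - (q*q)*(1-y)*real (Suc r')*(q*X2)
      = q * hf n k q"
  proof -
    have t2: "(q*q)*real (Suc m')*(q*X1)*(1-z) = q*(real (Suc m')*y*(1-z))"
    proof -
      have "(q*q)*real (Suc m')*(q*X1)*(1-z) = q*(real (Suc m')*(q*q*X1)*(1-z))" by (simp add: mult_ac)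
      then show ?thesis using qy by simp
    qed
    have t3: "(q*q)*(1-y)*real (Suc r')*(q*X2) = q*(real (Suc r')*z*(1-y))"
    proof -
      have "(q*q)*(1-y)*real (Suc r')*(q*X2) = q*(real (Suc r')*(q*q*X2)*(1-y))" by (simp add: mult_ac)
      then show ?thesis using qz by simp
    qed
    have "real (Suc m')*q*(1-y)*(1-z) - (q*q)*real (Suc m')*(q*X1)*(1-z) - (q*q)*(1-y)*real (Suc r')*(q*X2)
       = q * (real (Suc m')*(1-y)*(1-z) - real (Suc m')*y*(1-z) - real (Suc r')*z*(1-y))"
      unfolding t2 t3 by (simp add: algebra_simps)
    also have "real (Suc m')*(1-y)*(1-z) - real (Suc m')*y*(1-z) - real (Suc r')*z*(1-y) = hf n k q"
      unfolding hf_def y_def[symmetric] z_def[symmetric] m'[symmetric] r'[symmetric] by (simp add: algebra_simps)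
    finally show ?thesis .
  qed
  finally have "(q*q)^m' * (1-y)^m' * (1-z)^r' * (q * hf n k q) = 0" using D0 by simp
  moreover have "(q*q)^m' * (1-y)^m' * (1-z)^r' * q \<noteq> 0" using qq y01 z01 q0 by simp
  ultimately have "hf n k q = 0" by (metis mult_eq_0_iff)
  then show ?thesis using q0 q1 by simp
qed


lemma foc_point:
  assumes k: "k \<ge> 2" and n: "n > k" and q: "0 < q" "q < 1" and h: "hf n k q = 0"
  defines "y \<equiv> (q*q)^(k-1)" and "z \<equiv> (q*q)^k"
  shows "0 < y \<and> y < 1/2 \<and> 0 < z \<and> z < 1 \<and> z \<le> 2 * real (k-1) / (real n - real k) \<and>
         real n * z = real n / (real n - real k) * (real (k-1) * (1 - 2*y) * (1 - z) / (1 - y))"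
proof -
  have qq: "0 < q*q" "q*q < 1" using q mult_strict_mono[of q 1 q 1] by auto
  have y01: "0 < y" "y < 1" unfolding y_def using qq k by (auto simp: power_less_one_iff)
  have z01: "0 < z" "z < 1" unfolding z_def using qq k by (auto simp: power_less_one_iff)
  define m where "m = real (k-1)"
  define r where "r = real n - real k"
  have m0: "0 < m" unfolding m_def using k by simp
  have r0: "0 < r" unfolding r_def using n by simp
  have rr: "real (n-k) = r" unfolding r_def using n by simp
  have eq: "m * (1 - 2*y) * (1 - z) = r * z * (1 - y)"
    using h unfolding hf_def y_def[symmetric] z_def[symmetric] m_def[symmetric] rr by simp
  have pos: "0 < r * z * (1 - y)" using r0 z01 y01 by simp
  have y2: "y < 1/2"
  proof (rule ccontr)
    assume "\<not> y < 1/2"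
    then have "m * (1 - 2*y) \<le> 0" using m0 by (simp add: mult_nonneg_nonpos)
    then have "m * (1 - 2*y) * (1 - z) \<le> 0" using z01 by (simp add: mult_nonpos_nonneg)
    then show False using eq pos by simp
  qed
  have zb: "z \<le> 2 * m / r"
  proof -
    have "m * (1 - 2*y) * (1 - z) \<le> m"
    proof -
      have "(1 - 2*y) * (1 - z) \<le> 1" by (rule mult_le_one) (use y01 z01 y2 in auto)
      then have "m * ((1 - 2*y) * (1 - z)) \<le> m * 1" using m0 by (intro mult_left_mono) auto
      then show ?thesis by (simp add: mult.assoc)
    qed
    then have "r * z * (1 - y) \<le> m" using eq by simp
    moreover have "r * z * (1/2) \<le> r * z * (1 - y)" using y2 r0 z01 by (intro mult_left_mono) auto
    ultimately have "r * z \<le> 2 * m" by simp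
    then show ?thesis using r0 by (simp add: le_divide_eq mult.commute)
  qed
  have nz: "real n * z = real n / r * (m * (1 - 2*y) * (1 - z) / (1 - y))"
  proof -
    have d: "r * (1 - y) \<noteq> 0" using r0 y01 by simp
    have "z = m * (1 - 2*y) * (1 - z) / (r * (1 - y))"
      using d eq by (simp add: eq_divide_eq mult_ac)
    then have "real n * z = real n * (m * (1 - 2*y) * (1 - z) / (r * (1 - y)))" by simp
    also have "\<dots> = real n / r * (m * (1 - 2*y) * (1 - z) / (1 - y))" by simp
    finally show ?thesis .
  qed
  show ?thesis using y01 y2 z01 zb nz unfolding m_def r_def by blast
qed

lemma pow_powr_root: "0 < w \<Longrightarrow> k > 0 \<Longrightarrow> (w^k) powr (1/real k) = (w::real)"
  by (simp add: powr_realpow[symmetric] powr_powr)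

lemma lim_c_div: "((\<lambda>n. c / (real n - d)) \<longlongrightarrow> 0) sequentially"
proof -
  have "filterlim (\<lambda>n. - d + real n) at_top sequentially"
    by (rule filterlim_tendsto_add_at_top[OF tendsto_const filterlim_real_sequentially])
  then have "filterlim (\<lambda>n. real n - d) at_infinity sequentially"
    by (simp add: filterlim_at_top_imp_at_infinity)
  then show ?thesis by (rule tendsto_divide_0[OF tendsto_const])
qed

lemma foc_asymp:
  assumes k: "k \<ge> 2" and ev: "\<forall>\<^sub>F n in sequentially. 0 < Q n \<and> Q n < 1 \<and> hf n k (Q n) = 0"
  shows "((\<lambda>n. (Q n*Q n)^k) \<longlongrightarrow> 0) sequentially"
    and "((\<lambda>n. (Q n*Q n)^(k-1)) \<longlongrightarrow> 0) sequentially"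
    and "((\<lambda>n. real n * (Q n*Q n)^k) \<longlongrightarrow> real (k-1)) sequentially"
    and "((\<lambda>n. Q n * Q n * real n powr (1/real k)) \<longlongrightarrow> real (k-1) powr (1/real k)) sequentially"
proof -
  define z where "z n = (Q n*Q n)^k" for n
  define y where "y n = (Q n*Q n)^(k-1)" for n
  define m where "m = real (k-1)"
  have ev2: "\<forall>\<^sub>F n in sequentially. n > k \<and> 0 < Q n \<and> Q n < 1 \<and> hf n k (Q n) = 0"
    using eventually_conj[OF eventually_gt_at_top[of k] ev] by simp
  have evP: "\<forall>\<^sub>F n in sequentially. 0 < Q n \<and> 0 < y n \<and> y n < 1/2 \<and> 0 < z n \<and> z n < 1 \<and> z n \<le> 2 * m / (real n - real k) \<and>
         real n * z n = real n / (real n - real k) * (m * (1 - 2*y n) * (1 - z n) / (1 - y n))"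
    using ev2 by eventually_elim (use foc_point[OF k] in \<open>auto simp: y_def z_def m_def\<close>)
  show zlim: "((\<lambda>n. (Q n*Q n)^k) \<longlongrightarrow> 0) sequentially"
    unfolding z_def[symmetric]
  proof (rule tendsto_sandwich[of "\<lambda>_. 0" _ _ "\<lambda>n. 2 * m / (real n - real k)"])
    show "\<forall>\<^sub>F n in sequentially. 0 \<le> z n" using evP by eventually_elim auto
    show "\<forall>\<^sub>F n in sequentially. z n \<le> 2 * m / (real n - real k)" using evP by eventually_elim auto
  qed (auto intro: lim_c_div)
  have wlim: "((\<lambda>n. Q n * Q n) \<longlongrightarrow> 0) sequentially"
  proof -
    have "((\<lambda>n. z n powr (1/real k)) \<longlongrightarrow> 0) sequentially"
      by (rule tendsto_zero_powrI[OF zlim[folded z_def] tendsto_const]) (use evP k in \<open>auto elim: eventually_mono\<close>)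
    moreover have "\<forall>\<^sub>F n in sequentially. z n powr (1/real k) = Q n * Q n"
      using evP by eventually_elim (use k in \<open>auto simp: z_def intro!: pow_powr_root\<close>)
    ultimately show ?thesis by (rule Lim_transform_eventually)
  qed
  show ylim: "((\<lambda>n. (Q n*Q n)^(k-1)) \<longlongrightarrow> 0) sequentially"
  proof -
    have "(0::real)^(k-1) = 0" using k by simp
    then show ?thesis using tendsto_power[OF wlim, of "k-1"] by metis
  qed
  have q1: "((\<lambda>n. real n / (real n - real k)) \<longlongrightarrow> 1) sequentially"
  proof -
    have "((\<lambda>n. 1 + real k / (real n - real k)) \<longlongrightarrow> 1 + 0) sequentially"
      by (intro tendsto_add tendsto_const lim_c_div)
    moreover have "\<forall>\<^sub>F n in sequentially. 1 + real k / (real n - real k) = real n / (real n - real k)"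
      using eventually_gt_at_top[of k] by eventually_elim (auto simp: field_simps)
    ultimately show ?thesis by (auto intro: Lim_transform_eventually)
  qed
  have q2: "((\<lambda>n. m * (1 - 2*y n) * (1 - z n) / (1 - y n)) \<longlongrightarrow> m * (1 - 2*0) * (1 - 0) / (1 - 0)) sequentially"
    by (intro tendsto_intros ylim[folded y_def] zlim[folded z_def]) simp
  have nzlim: "((\<lambda>n. real n * z n) \<longlongrightarrow> m) sequentially"
  proof -
    have "((\<lambda>n. real n / (real n - real k) * (m * (1 - 2*y n) * (1 - z n) / (1 - y n))) \<longlongrightarrow> m) sequentially"
      using tendsto_mult[OF q1 q2] by simp
    then show ?thesis by (rule Lim_transform_eventually) (use evP in \<open>auto elim: eventually_mono\<close>)
  qed
  then show "((\<lambda>n. real n * (Q n*Q n)^k) \<longlongrightarrow> real (k-1)) sequentially"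
    unfolding z_def m_def .
  have "((\<lambda>n. (real n * z n) powr (1/real k)) \<longlongrightarrow> m powr (1/real k)) sequentially"
    by (rule tendsto_powr[OF nzlim tendsto_const]) (use k in \<open>simp add: m_def\<close>)
  moreover have "\<forall>\<^sub>F n in sequentially. (real n * z n) powr (1/real k) = Q n * Q n * real n powr (1/real k)"
    using evP
  proof eventually_elim
    case (elim n)
    have "(real n * z n) powr (1/real k) = real n powr (1/real k) * z n powr (1/real k)"
      by (rule powr_mult)
    also have "z n powr (1/real k) = Q n * Q n" unfolding z_def using elim k by (intro pow_powr_root) auto
    finally show ?case by simp
  qed
  ultimately show "((\<lambda>n. Q n * Q n * real n powr (1/real k)) \<longlongrightarrow> real (k-1) powr (1/real k)) sequentially"
    unfolding m_def by (rule Lim_transform_eventually)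
qed


lemma root_exists:
  assumes k: "k \<ge> 2" and n: "n > k"
  shows "\<exists>q. 0 < q \<and> q < 1 \<and> hf n k q = 0"
proof -
  define m where "m = real (k-1)"
  have m1: "1 \<le> m" unfolding m_def using k by simp
  define \<epsilon> where "\<epsilon> = 1 / (8*m)"
  have e: "0 < \<epsilon>" "\<epsilon> \<le> 1/8" unfolding \<epsilon>_def using m1 by (auto simp: field_simps)
  define q0 where "q0 = 1 - \<epsilon>"
  have q0: "0 < q0" "q0 < 1" unfolding q0_def using e by auto
  have qq: "0 < q0*q0" "q0*q0 < 1" using q0 mult_strict_mono[of q0 1 q0 1] by auto
  define y0 where "y0 = (q0*q0)^(k-1)"
  define z0 where "z0 = (q0*q0)^k"
  have "1 + real (2*(k-1)) * (-\<epsilon>) \<le> (1 + (-\<epsilon>))^(2*(k-1))"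
    by (rule Bernoulli_inequality) (use e in auto)
  moreover have "(1 + (-\<epsilon>))^(2*(k-1)) = y0"
    unfolding y0_def q0_def by (simp add: power_mult power2_eq_square)
  ultimately have B: "1 + real (2*(k-1)) * (-\<epsilon>) \<le> y0" by simp
  have "real (2*(k-1)) = 2*m" unfolding m_def by simp
  moreover have "2*m * \<epsilon> = 1/4" unfolding \<epsilon>_def using m1 by (simp add: field_simps)
  ultimately have "real (2*(k-1)) * \<epsilon> = 1/4" by metis
  then have "real (2*(k-1)) * (-\<epsilon>) = -(1/4)" by (simp only: mult_minus_right)
  then have "1 + real (2*(k-1)) * (-\<epsilon>) = 3/4" by linarith
  then have y0: "3/4 \<le> y0" using B by linarith
  have z0: "0 < z0" "z0 < 1" unfolding z0_def using qq k by (auto simp: power_less_one_iff)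
  have y1: "y0 < 1" unfolding y0_def using qq k by (auto simp: power_less_one_iff)
  have neg: "hf n k q0 < 0"
  proof -
    have "m * (1 - 2*y0) < 0" using m1 y0 by (simp add: mult_pos_neg)
    then have a: "m * (1 - 2*y0) * (1 - z0) < 0" using z0 by (simp add: mult_neg_pos)
    have b: "0 \<le> real (n-k) * z0 * (1 - y0)" using z0 y1 by simp
    show ?thesis unfolding hf_def using a b unfolding m_def y0_def z0_def by linarith
  qed
  have pos: "hf n k 0 = real (k-1)" unfolding hf_def using k by (simp add: power_0_left)
  have cont: "continuous_on {0..q0} (hf n k)" unfolding hf_def by (intro continuous_intros)
  obtain x where x: "0 \<le> x" "x \<le> q0" "hf n k x = 0"
    using IVT2'[of "hf n k" q0 0 0, OF _ _ _ cont] neg pos q0 by auto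
  have "x \<noteq> 0" using x pos k by auto
  then show ?thesis using x q0 by (intro exI[of _ x]) auto
qed

lemma cost_p:
  assumes c: "cost_ok c"
  shows "\<exists>B. \<forall>M\<ge>B. \<exists>p. 0 < p \<and> p < 1 \<and> (\<forall>a. 0 \<le> a \<and> a < 1 \<longrightarrow> a * p^m * M - c a \<le> p * p^m * M - c p)"
proof -
  obtain c' where der: "\<And>x. x \<in> {0..<1} \<Longrightarrow> (c has_real_derivative c' x) (at x within {0..<1})"
    and cc: "continuous_on {0..<1} c'"
    using c unfolding cost_ok_def by blast
  have cvx: "convex_on {0..<1} c" and c0: "c 0 = 0" and lim: "filterlim c at_top (at_left 1)"
    using c unfolding cost_ok_def by auto
  have tang: "c' p * (a - p) \<le> c a - c p" if p: "0 < p" "p < 1" and a: "0 \<le> a" "a < 1" for p a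
    by (rule convex_on_imp_above_tangent[OF cvx connected_Ico]) (use p a der in \<open>auto simp: interior_atLeastLessThan\<close>)
  define B where "B = max 1 (2^m * c' (1/2))"
  show ?thesis
  proof (rule exI[where x=B], intro allI impI)
    fix M assume MB: "B \<le> M"
    have M1: "1 \<le> M" using MB unfolding B_def by simp
    have Mh: "2^m * c' (1/2) \<le> M" using MB unfolding B_def by simp
    have "\<forall>\<^sub>F x in at_left 1. M \<le> c x \<and> x \<in> {1/2<..<(1::real)}"
      using lim[unfolded filterlim_at_top, rule_format, of M] eventually_at_left_real[of "1/2" 1]
      by (auto intro: eventually_conj)
    then obtain p2 where p2: "M \<le> c p2" "1/2 < p2" "p2 < 1"
      using eventually_happens'[OF trivial_limit_at_left_real] by fastforce
    have "c' p2 * (0 - p2) \<le> c 0 - c p2" using tang[of p2 0] p2 by simp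
    then have cp2: "c p2 \<le> c' p2 * p2" using c0 by simp
    have "0 < c' p2 * p2" using cp2 p2 M1 by linarith
    then have "0 < c' p2" using p2 by (simp add: zero_less_mult_iff)
    then have "c' p2 * p2 \<le> c' p2" using p2 by (simp add: mult_left_le)
    then have Mc: "M \<le> c' p2" using cp2 p2 by linarith
    define g where "g x = x^m * M - c' x" for x
    have g1: "0 \<le> g (1/2)"
    proof -
      have "c' (1/2) \<le> M / 2^m" using Mh by (simp add: field_simps)
      then show ?thesis unfolding g_def by (simp add: power_divide)
    qed
    have g2: "g p2 \<le> 0"
    proof -
      have "p2^m \<le> 1" using p2 by (simp add: power_le_one)
      then have "p2^m * M \<le> M" using M1 by (simp add: mult_left_le_one_le)
      then show ?thesis unfolding g_def using Mc by simp
    qed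
    have gc: "continuous_on {1/2..p2} g"
    proof -
      have "continuous_on {1/2..p2} c'" by (rule continuous_on_subset[OF cc]) (use p2 in auto)
      then show ?thesis unfolding g_def by (intro continuous_intros)
    qed
    obtain p where p: "1/2 \<le> p" "p \<le> p2" "g p = 0"
      using IVT2'[of g p2 0 "1/2", OF g2 g1 _ gc] p2 by auto
    have pp: "0 < p" "p < 1" using p p2 by auto
    have cpp: "c' p = p^m * M" using p unfolding g_def by simp
    show "\<exists>p. 0 < p \<and> p < 1 \<and> (\<forall>a. 0 \<le> a \<and> a < 1 \<longrightarrow> a * p^m * M - c a \<le> p * p^m * M - c p)"
    proof (intro exI[of _ p] conjI pp allI impI)
      fix a :: real assume a: "0 \<le> a \<and> a < 1"
      have "c' p * (a - p) \<le> c a - c p" using tang[of p a] pp a by simp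
      then show "a * p^m * M - c a \<le> p * p^m * M - c p" unfolding cpp by (simp add: algebra_simps)
    qed
  qed
qed


lemma exp_le_1mz:
  assumes "0 \<le> z" "z \<le> 1/2"
  shows "exp (-2*z) \<le> 1 - (z::real)"
proof -
  have z1: "0 < 1 - z" using assms by simp
  have "1 + z/(1-z) \<le> exp (z/(1-z))" by (rule exp_ge_add_one_self)
  moreover have "1 + z/(1-z) = 1/(1-z)" using z1 by (simp add: field_simps)
  moreover have "z/(1-z) \<le> 2*z"
  proof -
    have "z * 1 \<le> z * (2*(1-z))" using assms by (intro mult_left_mono) auto
    then have "z \<le> 2*z*(1-z)" by (simp add: mult_ac)
    then show ?thesis using z1 by (simp add: divide_le_eq)
  qed
  ultimately have "1/(1-z) \<le> exp (2*z)" by (smt (verit) exp_le_cancel_iff)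
  then have "1 \<le> exp (2*z) * (1-z)" using z1 by (simp add: divide_le_eq)
  then have "exp (-2*z) * 1 \<le> exp (-2*z) * (exp (2*z) * (1-z))" by (intro mult_left_mono) auto
  also have "\<dots> = 1 - z" by (simp add: exp_minus field_simps)
  finally show ?thesis by simp
qed

lemma powr_at_top_seq:
  assumes "0 < a"
  shows "filterlim (\<lambda>n. real n powr a) at_top sequentially"
proof -
  have "filterlim (\<lambda>n. ln (real n)) at_top sequentially"
    by (rule filterlim_compose[OF ln_at_top filterlim_real_sequentially])
  then have "filterlim (\<lambda>n. a * ln (real n)) at_top sequentially"
    by (rule filterlim_tendsto_pos_mult_at_top[OF tendsto_const assms])
  then have "filterlim (\<lambda>n. exp (a * ln (real n))) at_top sequentially"
    by (rule filterlim_compose[OF exp_at_top])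
  moreover have "\<forall>\<^sub>F n in sequentially. exp (a * ln (real n)) = real n powr a"
    using eventually_gt_at_top[of 0] by eventually_elim (simp add: powr_def)
  ultimately show ?thesis using filterlim_cong[OF refl refl] by (metis (mono_tags, lifting) filterlim_at_top_mono order.refl eventually_mono)
qed

lemma Gf_qq:
  assumes k: "k \<ge> 2"
  shows "Gf n k q q = (q*q)^(k-1) * (1 - (q*q)^(k-1))^(k-1) * (1 - (q*q)^k)^(n-k)"
proof -
  have "q*q*(q*q)^(k-2) = (q*q)^(k-1)" using qalpha[OF k, of q] by (simp add: mult_ac)
  moreover have "q*q*(q*q)^(k-1) = (q*q)^k" using qbeta[OF k, of q] by (simp add: mult_ac)
  ultimately show ?thesis unfolding Gf_def by (simp add: power_mult_distrib mult_ac)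
qed


lemma Mn_lim:
  assumes k: "k \<ge> 2" and ev: "\<forall>\<^sub>F n in sequentially. 0 < Q n \<and> Q n < 1 \<and> hf n k (Q n) = 0"
  shows "filterlim (\<lambda>n. real ((n-1) choose (k-1)) * Gf n k (Q n) (Q n)) at_top sequentially"
proof -
  define m where "m = k - 1"
  define mr where "mr = real m"
  have m0: "0 < m" and mr0: "0 < mr" unfolding m_def mr_def using k by auto
  note A = foc_asymp[OF k ev]
  define L where "L = real (k-1) powr (1/real k)"
  have L0: "0 < L" unfolding L_def using k by simp
  have nw: "filterlim (\<lambda>n. real n * (Q n * Q n)) at_top sequentially"
  proof -
    have "filterlim (\<lambda>n. (Q n * Q n * real n powr (1/real k)) * real n powr (1 - 1/real k)) at_top sequentially"
      by (rule filterlim_tendsto_pos_mult_at_top[OF A(4)[folded L_def] L0 powr_at_top_seq]) (use k in simp)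
    moreover have "\<forall>\<^sub>F n in sequentially. (Q n * Q n * real n powr (1/real k)) * real n powr (1 - 1/real k) = real n * (Q n * Q n)"
      using eventually_gt_at_top[of 0]
    proof eventually_elim
      case (elim n)
      have "real n powr (1/real k) * real n powr (1 - 1/real k) = real n powr (1/real k + (1 - 1/real k))"
        by (rule powr_add[symmetric])
      also have "\<dots> = real n" using elim by simp
      finally show ?case by (simp add: mult_ac)
    qed
    then have "\<forall>\<^sub>F n in sequentially. (Q n * Q n * real n powr (1/real k)) * real n powr (1 - 1/real k) \<le> real n * (Q n * Q n)"
      by (rule eventually_mono) (simp only: order.refl)
    ultimately show ?thesis by (rule filterlim_at_top_mono)
  qed
  define F where "F n = exp (-4*mr) * ((1/(4*mr)) * (real n * (Q n * Q n)))^m" for n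
  have Flim: "filterlim F at_top sequentially"
  proof -
    have "filterlim (\<lambda>n. (1/(4*mr)) * (real n * (Q n * Q n))) at_top sequentially"
      by (rule filterlim_tendsto_pos_mult_at_top[OF tendsto_const _ nw]) (use mr0 in simp)
    then have P: "filterlim (\<lambda>n. ((1/(4*mr)) * (real n * (Q n * Q n)))^m) at_top sequentially"
      by (rule filterlim_pow_at_top[OF m0])
    show ?thesis unfolding F_def
      by (rule filterlim_tendsto_pos_mult_at_top[OF tendsto_const _ P]) simp
  qed
  have ev_z: "\<forall>\<^sub>F n in sequentially. (Q n * Q n)^k < 1/2"
    using order_tendstoD(2)[OF A(1), of "1/2"] by simp
  have ev_nz: "\<forall>\<^sub>F n in sequentially. real n * (Q n * Q n)^k < 2 * mr"
    using order_tendstoD(2)[OF A(3), of "2*mr"] mr0 unfolding mr_def m_def by simp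
  have evall: "\<forall>\<^sub>F n in sequentially. n \<ge> 2 \<and> n > k \<and> (0 < Q n \<and> Q n < 1 \<and> hf n k (Q n) = 0)
     \<and> (Q n * Q n)^k < 1/2 \<and> real n * (Q n * Q n)^k < 2 * mr"
    using eventually_ge_at_top[of 2] eventually_gt_at_top[of k] ev ev_z ev_nz
    by eventually_elim auto
  have "\<forall>\<^sub>F n in sequentially. F n \<le> real ((n-1) choose (k-1)) * Gf n k (Q n) (Q n)"
    using evall
  proof eventually_elim
    case (elim n)
    define q where "q = Q n"
    define w where "w = q*q"
    define y where "y = (q*q)^(k-1)"
    define z where "z = (q*q)^k"
    have n2: "n \<ge> 2" and nk: "n > k" and q: "0 < q" "q < 1" and h: "hf n k q = 0"
      and z2: "z < 1/2" and nz: "real n * z < 2 * mr"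
      using elim unfolding q_def z_def by auto
    have fp: "0 < y \<and> y < 1/2 \<and> 0 < z \<and> z < 1"
      using foc_point[OF k nk q h] unfolding y_def z_def by blast
    have w0: "0 < w" unfolding w_def using q by simp
    have G: "Gf n k q q = w^m * (1 - y)^m * (1 - z)^(n-k)"
      unfolding Gf_qq[OF k] w_def y_def z_def m_def ..
    define C where "C = real ((n-1) choose (k-1))"
    have C1: "(real n / (2*mr))^m \<le> C"
    proof -
      have "(real (n-1) / real (k-1))^(k-1) \<le> C"
        unfolding C_def by (rule binomial_ge_n_over_k_pow_k) (use nk in simp)
      moreover have "(real n / (2*mr))^m \<le> (real (n-1) / real (k-1))^(k-1)"
        unfolding m_def mr_def
      proof (rule power_mono)
        have "real n / 2 \<le> real (n-1)" using n2 by (simp add: of_nat_diff)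
        then have "(real n / 2) / real (k-1) \<le> real (n-1) / real (k-1)"
          using k by (intro divide_right_mono) auto
        then show "real n / (2 * real (k-1)) \<le> real (n-1) / real (k-1)" by simp
      qed simp
      ultimately show ?thesis by simp
    qed
    have Y: "(1/2)^m \<le> (1 - y)^m" using fp by (intro power_mono) auto
    have Z: "exp (-4*mr) \<le> (1 - z)^(n-k)"
    proof -
      have "exp (-2*z)^(n-k) \<le> (1 - z)^(n-k)"
        by (rule power_mono[OF exp_le_1mz]) (use fp z2 in auto)
      moreover have "exp (-2*z)^(n-k) = exp (real (n-k) * (-2*z))" by (rule exp_of_nat_mult[symmetric])
      moreover have "-4*mr \<le> real (n-k) * (-2*z)"
      proof -
        have "real (n-k) * z \<le> real n * z" using fp by (intro mult_right_mono) auto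
        then have "real (n-k) * z \<le> 2*mr" using nz by linarith
        then show ?thesis by (simp add: mult.commute)
      qed
      ultimately show ?thesis by (smt (verit) exp_le_cancel_iff)
    qed
    have "F n = exp (-4*mr) * ((real n / (2*mr))^m * w^m * (1/2)^m)"
    proof -
      have e: "(1/(4*mr)) * (real n * w) = real n / (2*mr) * w * (1/2)" by (simp add: field_simps)
      have "F n = exp (-4*mr) * (real n / (2*mr) * w * (1/2))^m"
        unfolding F_def q_def[symmetric] w_def[symmetric] e ..
      then show ?thesis by (simp only: power_mult_distrib)
    qed
    also have "\<dots> \<le> (1 - z)^(n-k) * (C * w^m * (1 - y)^m)"
      by (intro mult_mono Z C1 Y order.refl) (use w0 fp mr0 in \<open>auto simp: C_def\<close>)
    also have "\<dots> = C * Gf n k q q" unfolding G by (simp add: mult_ac)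
    finally show ?case unfolding C_def q_def .
  qed
  then show ?thesis by (rule filterlim_at_top_mono[OF Flim])
qed

theorem propositionC1:
  fixes k :: nat and c :: "real \<Rightarrow> real"
  assumes "k \<ge> 2" and "cost_ok c"
  shows "(\<forall>\<^sub>F n in sequentially. \<exists>ps qs. sym_inv_eq k 0 c n ps qs) \<and>
         (\<forall>P Q :: nat \<Rightarrow> real.
            (\<forall>\<^sub>F n in sequentially. sym_inv_eq k 0 c n (P n) (Q n)) \<longrightarrow>
            ((\<lambda>n. iota (Q n) (Q n) * real n powr (1 / real k))
               \<longlonglongrightarrow> real (k - 1) powr (1 / real k)))"
proof
  have k: "k \<ge> 2" and c: "cost_ok c" using assms by auto
  define Qc where "Qc n = (SOME q. 0 < q \<and> q < 1 \<and> hf n k q = 0)" for n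
  have evQ: "\<forall>\<^sub>F n in sequentially. 0 < Qc n \<and> Qc n < 1 \<and> hf n k (Qc n) = 0"
    using eventually_gt_at_top[of k]
  proof eventually_elim
    case (elim n)
    show ?case unfolding Qc_def by (rule someI_ex[OF root_exists[OF k elim]])
  qed
  define Mn where "Mn n = real ((n-1) choose (k-1)) * Gf n k (Qc n) (Qc n)" for n
  have Mlim: "filterlim Mn at_top sequentially" unfolding Mn_def by (rule Mn_lim[OF k evQ])
  obtain B where B: "\<And>M. M \<ge> B \<Longrightarrow> \<exists>p. 0 < p \<and> p < 1 \<and> (\<forall>a. 0 \<le> a \<and> a < 1 \<longrightarrow> a * p^(k-1) * M - c a \<le> p * p^(k-1) * M - c p)"
    using cost_p[OF c, of "k-1"] by blast
  have evB: "\<forall>\<^sub>F n in sequentially. B \<le> Mn n" using Mlim unfolding filterlim_at_top by blast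
  show "\<forall>\<^sub>F n in sequentially. \<exists>ps qs. sym_inv_eq k 0 c n ps qs"
    using evQ evB eventually_gt_at_top[of k]
  proof eventually_elim
    case (elim n)
    define q where "q = Qc n"
    have q: "0 < q" "q < 1" "hf n k q = 0" using elim unfolding q_def by auto
    have nk: "n > k" using elim by simp
    obtain p where p: "0 < p" "p < 1" and popt: "\<And>a. 0 \<le> a \<Longrightarrow> a < 1 \<Longrightarrow> a * p^(k-1) * Mn n - c a \<le> p * p^(k-1) * Mn n - c p"
      using B[of "Mn n"] elim by blast
    define C where "C = real ((n-1) choose (k-1))"
    have C0: "0 \<le> C" unfolding C_def by simp
    have Mq: "Mn n = C * Gf n k q q" unfolding Mn_def C_def q_def ..
    have n0: "0 < n" using nk by simp
    have "sym_inv_eq k 0 c n p q"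
      unfolding sym_iff[OF k n0]
    proof (intro conjI allI impI)
      show "0 < p" by fact
      show "admissible p q" unfolding admissible_def using p q by simp
      fix a b assume ab: "admissible a b"
      then have a: "0 \<le> a" "a < 1" and b: "0 \<le> b" "b \<le> 1" unfolding admissible_def by auto
      have "Ef n k p q a b = C * (a * p^(k-1)) * Gf n k q b" unfolding Ef_Gf C_def ..
      also have "\<dots> \<le> C * (a * p^(k-1)) * Gf n k q q"
        by (intro mult_left_mono Gf_max[OF k q(1,2,3) b]) (use C0 a p in auto)
      also have "\<dots> = a * p^(k-1) * Mn n" unfolding Mq by (simp add: mult_ac)
      finally have E1: "Ef n k p q a b \<le> a * p^(k-1) * Mn n" .
      have E2: "Ef n k p q p q = p * p^(k-1) * Mn n" unfolding Ef_Gf Mq C_def by (simp add: mult_ac)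
      show "Ef n k p q a b - c a \<le> Ef n k p q p q - c p"
        using E1 E2 popt[OF a] by linarith
    qed
    then show ?case unfolding q_def by blast
  qed
next
  have k: "k \<ge> 2" and c: "cost_ok c" using assms by auto
  show "\<forall>P Q :: nat \<Rightarrow> real.
            (\<forall>\<^sub>F n in sequentially. sym_inv_eq k 0 c n (P n) (Q n)) \<longrightarrow>
            ((\<lambda>n. iota (Q n) (Q n) * real n powr (1 / real k))
               \<longlonglongrightarrow> real (k - 1) powr (1 / real k))"
  proof (intro allI impI)
    fix P Q :: "nat \<Rightarrow> real"
    assume ev: "\<forall>\<^sub>F n in sequentially. sym_inv_eq k 0 c n (P n) (Q n)"
    have "\<forall>\<^sub>F n in sequentially. 0 < Q n \<and> Q n < 1 \<and> hf n k (Q n) = 0"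
      using ev eventually_gt_at_top[of k]
      by eventually_elim (use eq_necessary[OF k _ c] in blast)
    from foc_asymp(4)[OF k this] show "((\<lambda>n. iota (Q n) (Q n) * real n powr (1 / real k))
               \<longlonglongrightarrow> real (k - 1) powr (1 / real k))"
      unfolding iota_def .
  qed
qed


end
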